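(* Let $P$ be a convex euclidean $p$-gon, and let $G$ be the group of isometries of $\mathbb R^2$ generated by the point reflections $T_1,\dots,T_p$ in the vertices of $P$, with generating set $S=\{T_1,\dots,T_p\}$. Then $|G_S^{(n)}|\prec n^{p-1}$.
   Context: $G_S^{(n)}$ denotes the set of elements of $G$ expressible as products of at most $n$ elements of $S\cup S^{-1}$. $g\prec h$ means $g(n)\le Ch(n)$ for some constant $C$ and all sufficiently large $n$. *)

theory Defs
  imports "HOL-Analysis.Analysis"
begin

definition point_reflection :: "complex \<Rightarrow> complex \<Rightarrow> complex" where
  "point_reflection v = (\<lambda>z. 2 * v - z)"

definition word_ball :: "('a \<Rightarrow> 'a) set \<Rightarrow> nat \<Rightarrow> ('a \<Rightarrow> 'a) set" where
  "word_ball S n = {foldr (\<circ>) fs id | fs. length fs \<le> n \<and> set fs \<subseteq> S \<union> inv ` S}"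

definition convex_polygon :: "nat \<Rightarrow> (nat \<Rightarrow> complex) \<Rightarrow> bool" where
  "convex_polygon p v \<longleftrightarrow> p \<ge> 3 \<and> inj_on v {..<p} \<and>
     (\<forall>i<p. v i \<notin> convex hull (v ` ({..<p} - {i})))"

end

theory Submission
  imports Defs
begin

lemma pr_inv: "inv (point_reflection a) = point_reflection a"
  by (rule inv_unique_comp) (auto simp: point_reflection_def fun_eq_iff)

lemma word_form:
  assumes "set fs \<subseteq> point_reflection ` v ` {..<p}"
  shows "\<exists>c::nat\<Rightarrow>int. foldr (\<circ>) fs id = (\<lambda>z. (-1)^length fs * z + 2 * (\<Sum>i<p. of_int (c i) * v i))
     \<and> (\<Sum>i<p. \<bar>c i\<bar>) \<le> int (length fs) \<and> (\<Sum>i<p. c i) = (if even (length fs) then 0 else 1)"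
  using assms
proof (induction fs)
  case Nil
  show ?case by (rule exI[of _ "\<lambda>_. 0"]) (auto simp: fun_eq_iff)
next
  case (Cons f fs)
  have "set fs \<subseteq> point_reflection ` v ` {..<p}" using Cons.prems by simp
  from Cons.IH[OF this] obtain c where c: "foldr (\<circ>) fs id = (\<lambda>z. (-1)^length fs * z + 2 * (\<Sum>i<p. of_int (c i) * v i))"
     "(\<Sum>i<p. \<bar>c i\<bar>) \<le> int (length fs)" "(\<Sum>i<p. c i) = (if even (length fs) then 0 else 1)"
    by blast
  from Cons.prems obtain j where j: "j < p" "f = point_reflection (v j)" by auto
  define c' where "c' = (\<lambda>i. (if i = j then 1 else 0) - c i)"
  have s1: "(\<Sum>i<p. of_int (c' i) * v i) = v j - (\<Sum>i<p. of_int (c i) * v i)"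
  proof -
    have "(\<Sum>i<p. of_int (if i = j then 1 else 0) * v i) = (\<Sum>i<p. if i = j then v j else 0)"
      by (rule sum.cong) auto
    also have "\<dots> = v j" using j(1) by simp
    finally have d: "(\<Sum>i<p. of_int (if i = j then 1 else 0) * v i) = v j" .
    show ?thesis unfolding c'_def of_int_diff left_diff_distrib sum_subtractf d ..
  qed
  have "(\<Sum>i<p. \<bar>c' i\<bar>) \<le> (\<Sum>i<p. (if i = j then 1 else 0) + \<bar>c i\<bar>)"
    unfolding c'_def by (rule sum_mono) auto
  also have "\<dots> = 1 + (\<Sum>i<p. \<bar>c i\<bar>)" using j(1) by (simp add: sum.distrib)
  finally have s2: "(\<Sum>i<p. \<bar>c' i\<bar>) \<le> int (length (f # fs))" using c(2) by simp
  have s3: "(\<Sum>i<p. c' i) = 1 - (\<Sum>i<p. c i)"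
    unfolding c'_def using j(1) by (simp add: sum_subtractf)
  show ?case
  proof (intro exI[of _ c'] conjI)
    show "foldr (\<circ>) (f # fs) id = (\<lambda>z. (-1)^length (f # fs) * z + 2 * (\<Sum>i<p. of_int (c' i) * v i))"
    proof -
      have "foldr (\<circ>) (f#fs) id = point_reflection (v j) \<circ> foldr (\<circ>) fs id" using j(2) by simp
      then show ?thesis unfolding s1 c(1) by (simp add: fun_eq_iff point_reflection_def algebra_simps)
    qed
    show "(\<Sum>i<p. \<bar>c' i\<bar>) \<le> int (length (f # fs))" by (rule s2)
    show "(\<Sum>i<p. c' i) = (if even (length (f # fs)) then 0 else 1)" using s3 c(3) by auto
  qed
qed

theorem mainTheorem16:
  fixes p :: nat and v :: "nat \<Rightarrow> complex"
  assumes "convex_polygon p v"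
  shows "\<exists>C::real. \<forall>\<^sub>F n in sequentially.
           real (card (word_ball (point_reflection ` v ` {..<p}) n)) \<le> C * real n ^ (p - 1)"
proof -
  from assms have "p \<ge> 3" by (simp add: convex_polygon_def)
  then obtain q where pq: "p = Suc q" by (cases p) auto
  define S where "S = point_reflection ` v ` {..<p}"
  have invS: "inv ` S = S" unfolding S_def by (auto simp: pr_inv image_image)
  define D where "D = (\<lambda>n::nat. ({..<q} \<rightarrow>\<^sub>E {-int n..int n}) \<times> {0,1::int} \<times> {1,-1::complex})"
  define F where "F = (\<lambda>(c::nat\<Rightarrow>int, d::int, s::complex). (\<lambda>z. s * z + 2 * ((\<Sum>i<q. of_int (c i) * v i)
        + of_int (d - (\<Sum>i<q. c i)) * v q)))"
  have finD: "finite (D n)" for n unfolding D_def by (auto intro!: finite_PiE)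
  have cI: "card {-int n..int n} = 2 * n + 1" for n by simp
  have cardD: "card (D n) = (2 * n + 1) ^ q * 4" for n
    unfolding D_def using cI by (simp add: card_cartesian_product card_PiE)
  have sub: "word_ball S n \<subseteq> F ` D n" for n
  proof
    fix g assume "g \<in> word_ball S n"
    then obtain fs where fs: "g = foldr (\<circ>) fs id" "length fs \<le> n" "set fs \<subseteq> S"
      unfolding word_ball_def using invS by auto
    from word_form[OF fs(3)[unfolded S_def]] obtain c where c:
      "foldr (\<circ>) fs id = (\<lambda>z. (-1)^length fs * z + 2 * (\<Sum>i<p. of_int (c i) * v i))"
      "(\<Sum>i<p. \<bar>c i\<bar>) \<le> int (length fs)" "(\<Sum>i<p. c i) = (if even (length fs) then 0 else 1)"
      by blast
    define d where "d = (\<Sum>i<p. c i)"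
    have bnd: "\<bar>c i\<bar> \<le> int n" if "i < p" for i
    proof -
      have "\<bar>c i\<bar> \<le> (\<Sum>i<p. \<bar>c i\<bar>)"
        using that by (intro member_le_sum) auto
      then show ?thesis using c(2) fs(2) by linarith
    qed
    have cq: "c q = d - (\<Sum>i<q. c i)" unfolding d_def pq by simp
    have mem: "(restrict c {..<q}, d, (-1)^length fs) \<in> D n"
    proof -
      have "restrict c {..<q} \<in> {..<q} \<rightarrow>\<^sub>E {-int n..int n}"
      proof (rule PiE_I)
        fix x assume x: "x \<in> {..<q}"
        then have "\<bar>c x\<bar> \<le> int n" using bnd pq by simp
        then show "restrict c {..<q} x \<in> {-int n..int n}" using x by auto
      next
        fix x assume "x \<notin> {..<q}" then show "restrict c {..<q} x = undefined" by simp
      qed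
      moreover have "d \<in> {0,1}" using c(3) unfolding d_def by auto
      moreover have "((-1)^length fs :: complex) \<in> {1,-1}" by (cases "even (length fs)") auto
      ultimately show ?thesis unfolding D_def by blast
    qed
    have "g = F (restrict c {..<q}, d, (-1)^length fs)"
      unfolding F_def fs(1) c(1) pq using cq
      by (auto simp: fun_eq_iff)
    then show "g \<in> F ` D n" using mem by blast
  qed
  have le: "card (word_ball S n) \<le> (2 * n + 1) ^ q * 4" for n
    using card_mono[OF finite_imageI[OF finD] sub] card_image_le[OF finD] cardD by (metis le_trans)
  show ?thesis
  proof (intro exI[of _ "4 * 3 ^ q"] eventually_sequentiallyI[of 1])
    fix n :: nat assume n: "n \<ge> 1"
    have "real (card (word_ball S n)) \<le> real ((2 * n + 1) ^ q * 4)" using le[of n] by linarith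
    also have "\<dots> = 4 * (2 * real n + 1) ^ q" by (simp add: add.commute)
    also have "\<dots> \<le> 4 * (3 * real n) ^ q" using n by (intro mult_left_mono power_mono) auto
    also have "\<dots> = 4 * 3 ^ q * real n ^ (p - 1)" by (simp add: pq power_mult_distrib)
    finally show "real (card (word_ball (point_reflection ` v ` {..<p}) n)) \<le> 4 * 3 ^ q * real n ^ (p - 1)"
      unfolding S_def .
  qed
qed

end
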